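(* Let $p$ be an odd prime, $P,Q\in\mathbb Z_p$ with $PQ\not\equiv0\pmod p$. Then $$U_{\frac{p-1}2}(P,Q)\equiv\frac{2P}Q\Big(\frac Pp\Big)\sum_{k=1}^{[\frac{p+1}4]}\binom{4k-2}{2k-1}\Big(\frac Q{4P^2}\Big)^k\pmod p.$$
   Context: The Lucas sequence $U_n(P,Q)$ is defined by $U_0=0$, $U_1=1$, $U_{n+1}=PU_n-QU_{n-1}$ for $n\ge1$. $[x]$ is the greatest integer $\le x$; $\mathbb Z_p$ is the set of rational numbers whose denominator is not divisible by $p$; $(\frac{\cdot}{p})$ is the Legendre symbol. *)

theory Defs
  imports "HOL-Number_Theory.Number_Theory"
begin

fun lucasU :: "rat \<Rightarrow> rat \<Rightarrow> nat \<Rightarrow> rat" where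
  "lucasU P Q 0 = 0"
| "lucasU P Q (Suc 0) = 1"
| "lucasU P Q (Suc (Suc n)) = P * lucasU P Q (Suc n) - Q * lucasU P Q n"

definition in_Zp :: "nat \<Rightarrow> rat \<Rightarrow> bool" where
  "in_Zp p x \<longleftrightarrow> \<not> int p dvd snd (quotient_of x)"

definition rat_cong :: "rat \<Rightarrow> rat \<Rightarrow> nat \<Rightarrow> bool" where
  "rat_cong x y p \<longleftrightarrow> in_Zp p ((x - y) / of_nat p)"

text \<open>Legendre symbol of a/b \<in> Z_p, taken as (ab/p) = (a/p)(b/p).\<close>
definition Legendre_rat :: "rat \<Rightarrow> nat \<Rightarrow> int" where
  "Legendre_rat x p = Legendre (fst (quotient_of x) * snd (quotient_of x)) (int p)"

end

theory Submission
  imports Defs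
begin


lemma inZp_iff:
  assumes "prime p"
  shows "in_Zp p x \<longleftrightarrow> (\<exists>a b. b \<noteq> 0 \<and> \<not> int p dvd b \<and> x = of_int a / of_int b)"
proof
  assume "in_Zp p x"
  obtain a b where q: "quotient_of x = (a,b)" by (cases "quotient_of x")
  then show "\<exists>a b. b \<noteq> 0 \<and> \<not> int p dvd b \<and> x = of_int a / of_int b"
    using \<open>in_Zp p x\<close> quotient_of_denom_pos[OF q] quotient_of_div[OF q]
    unfolding in_Zp_def by (intro exI[of _ a] exI[of _ b]) auto
next
  assume "\<exists>a b. b \<noteq> 0 \<and> \<not> int p dvd b \<and> x = of_int a / of_int b"
  then obtain a b where ab: "b \<noteq> 0" "\<not> int p dvd b" "x = of_int a / of_int b" by blast
  obtain a' b' where q: "quotient_of x = (a',b')" by (cases "quotient_of x")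
  have b'0: "b' > 0" using quotient_of_denom_pos[OF q] .
  have cop: "coprime a' b'" using quotient_of_coprime[OF q] .
  have "of_int a / of_int b = (of_int a' / of_int b' :: rat)" using ab quotient_of_div[OF q] by simp
  then have "a * b' = a' * b" using ab b'0
    by (simp add: field_simps) (metis of_int_eq_iff of_int_mult)
  then have "b' dvd a' * b" by (metis dvd_triv_right)
  then have "b' dvd b" using cop by (metis coprime_commute coprime_dvd_mult_right_iff)
  then show "in_Zp p x" using ab q unfolding in_Zp_def by (auto dest: dvd_trans)
qed

context
  fixes p :: nat
  assumes pp: "prime p"
begin

lemma Zp_add: "in_Zp p x \<Longrightarrow> in_Zp p y \<Longrightarrow> in_Zp p (x + y)"
proof -
  assume "in_Zp p x" "in_Zp p y"
  then obtain a b c d where h: "b \<noteq> 0" "\<not> int p dvd b" "x = of_int a / of_int b"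
     "d \<noteq> 0" "\<not> int p dvd d" "y = of_int c / of_int d" using inZp_iff[OF pp] by meson
  have "x + y = of_int (a*d + c*b) / of_int (b*d)" using h by (simp add: field_simps)
  moreover have "\<not> int p dvd b*d" using h pp by (simp add: prime_dvd_mult_iff)
  ultimately show ?thesis using h inZp_iff[OF pp] by (metis mult_eq_0_iff)
qed

lemma Zp_mult: "in_Zp p x \<Longrightarrow> in_Zp p y \<Longrightarrow> in_Zp p (x * y)"
proof -
  assume "in_Zp p x" "in_Zp p y"
  then obtain a b c d where h: "b \<noteq> 0" "\<not> int p dvd b" "x = of_int a / of_int b"
     "d \<noteq> 0" "\<not> int p dvd d" "y = of_int c / of_int d" using inZp_iff[OF pp] by meson
  have "x * y = of_int (a*c) / of_int (b*d)" using h by (simp add: field_simps)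
  moreover have "\<not> int p dvd b*d" using h pp by (simp add: prime_dvd_mult_iff)
  ultimately show ?thesis using h inZp_iff[OF pp] by (metis mult_eq_0_iff)
qed

lemma Zp_int: "in_Zp p (of_int a)"
proof -
  have "\<not> int p dvd 1" using pp by (metis of_nat_1 int_dvd_int_iff nat_dvd_1_iff_1 not_prime_1)
  then show ?thesis using inZp_iff[OF pp, of "of_int a"]
    by (metis div_by_1 of_int_1 one_neq_zero)
qed

lemma Zp_nat: "in_Zp p (of_nat a)"
  using Zp_int[of "int a"] by simp

lemma Zp_uminus: "in_Zp p x \<Longrightarrow> in_Zp p (- x)"
  using Zp_mult[of "-1" x] Zp_int[of "-1"] by simp

lemma Zp_diff: "in_Zp p x \<Longrightarrow> in_Zp p y \<Longrightarrow> in_Zp p (x - y)"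
  using Zp_add[of x "-y"] Zp_uminus by simp

lemma Zp_power: "in_Zp p x \<Longrightarrow> in_Zp p (x ^ n)"
  by (induction n) (auto intro: Zp_mult simp: Zp_int[of 1, simplified])

lemma Zp_inverse_int: "\<not> int p dvd a \<Longrightarrow> in_Zp p (1 / of_int a)"
  using inZp_iff[OF pp, of "1 / of_int a"] by (metis dvd_0_right of_int_1)

lemma Zp_unit_inverse:
  assumes "in_Zp p x" "\<not> in_Zp p (x / of_nat p)"
  shows "in_Zp p (1 / x)"
proof -
  obtain a b where h: "b \<noteq> 0" "\<not> int p dvd b" "x = of_int a / of_int b"
    using assms(1) inZp_iff[OF pp] by meson
  have "\<not> int p dvd a"
  proof
    assume "int p dvd a"
    then obtain c where "a = int p * c" by blast
    then have "x / of_nat p = of_int c / of_int b" using h pp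
      by (simp add: field_simps prime_gt_0_nat)
    then show False using assms(2) h inZp_iff[OF pp] by metis
  qed
  then have "a \<noteq> 0" by auto
  have "1 / x = of_int b / of_int a" using h by simp
  then show ?thesis using \<open>a \<noteq> 0\<close> \<open>\<not> int p dvd a\<close> inZp_iff[OF pp] by metis
qed

lemma cg_refl: "rat_cong x x p"
  unfolding rat_cong_def using Zp_int[of 0] by simp

lemma cg_sym: "rat_cong x y p \<Longrightarrow> rat_cong y x p"
proof -
  assume "rat_cong x y p"
  moreover have "(y - x) / of_nat p = - ((x - y) / of_nat p)" by (metis minus_diff_eq minus_divide_left)
  ultimately show ?thesis unfolding rat_cong_def using Zp_uminus by simp
qed

lemma cg_trans: "rat_cong x y p \<Longrightarrow> rat_cong y z p \<Longrightarrow> rat_cong x z p"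
  unfolding rat_cong_def using Zp_add[of "(x - y) / of_nat p" "(y - z) / of_nat p"]
  by (simp add: field_simps diff_divide_distrib[symmetric] add_divide_distrib[symmetric])

lemma cg_add: "rat_cong a b p \<Longrightarrow> rat_cong c d p \<Longrightarrow> rat_cong (a + c) (b + d) p"
  unfolding rat_cong_def using Zp_add[of "(a - b) / of_nat p" "(c - d) / of_nat p"]
  by (simp add: add_divide_distrib[symmetric] algebra_simps)

lemma cg_mult_right: "rat_cong a b p \<Longrightarrow> in_Zp p u \<Longrightarrow> rat_cong (a * u) (b * u) p"
  unfolding rat_cong_def using Zp_mult[of "(a - b) / of_nat p" u]
  by (simp add: algebra_simps)

lemma cg_mult: "rat_cong a b p \<Longrightarrow> rat_cong c d p \<Longrightarrow> in_Zp p a \<Longrightarrow> in_Zp p d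
  \<Longrightarrow> rat_cong (a * c) (b * d) p"
proof -
  assume h: "rat_cong a b p" "rat_cong c d p" "in_Zp p a" "in_Zp p d"
  have "rat_cong (c * a) (d * a) p" using cg_mult_right h by blast
  moreover have "rat_cong (a * d) (b * d) p" using cg_mult_right h by blast
  ultimately show ?thesis using cg_trans by (metis mult.commute)
qed

lemma cg_sum: "(\<And>i. i \<in> A \<Longrightarrow> rat_cong (f i) (g i) p) \<Longrightarrow> rat_cong (sum f A) (sum g A) p"
  by (induction A rule: infinite_finite_induct) (auto intro: cg_add cg_refl)

lemma cg_int: "[a = b] (mod int p) \<Longrightarrow> rat_cong (of_int a) (of_int b) p"
proof -
  assume "[a = b] (mod int p)"
  then obtain c where "a - b = int p * c" by (metis cong_iff_dvd_diff dvd_def)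
  then have "(of_int a - of_int b) / (of_nat p :: rat) = of_int c" using pp
    by (simp add: field_simps prime_gt_0_nat)
  then show ?thesis unfolding rat_cong_def using Zp_int by simp
qed

lemma legendre_cg:
  assumes "odd p" "in_Zp p P"
  shows "rat_cong (of_int (Legendre_rat P p)) (P ^ ((p - 1) div 2)) p"
proof -
  obtain a b where q: "quotient_of P = (a,b)" by (cases "quotient_of P")
  have b0: "b > 0" using quotient_of_denom_pos[OF q] .
  have Pab: "P = of_int a / of_int b" using quotient_of_div[OF q] .
  have pb: "\<not> int p dvd b" using assms(2) q unfolding in_Zp_def by simp
  have p2: "2 < p" proof -
    have "p \<noteq> 2" using assms(1) by auto
    then show ?thesis using prime_ge_2_nat[OF pp] by simp
  qed
  define n where "n = (p - 1) div 2"
  have pn: "p - 1 = 2 * n" unfolding n_def using assms(1) by simp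
  have L: "Legendre_rat P p = Legendre (a*b) (int p)" unfolding Legendre_rat_def q by simp
  have e1: "rat_cong (of_int (Legendre_rat P p)) (of_int ((a*b)^n)) p"
    unfolding L n_def by (rule cg_int) (rule euler_criterion[OF pp p2])
  have "\<not> p dvd nat b" using pb b0 by (simp add: int_dvd_int_iff[symmetric])
  then have "[nat b ^ (p - 1) = 1] (mod p)" by (rule fermat_theorem[OF pp])
  then have "[int (nat b ^ (p - 1)) = int 1] (mod int p)" by (simp only: cong_int_iff)
  then have "[b ^ (p - 1) = 1] (mod int p)" using b0 by simp
  then have e2: "rat_cong (of_int (b ^ (p-1))) 1 p" using cg_int by fastforce
  have e3: "rat_cong (of_int (b ^ (p-1)) * P^n) (1 * P^n) p"
    by (rule cg_mult_right[OF e2 Zp_power[OF assms(2)]])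
  have "of_int ((a*b)^n) = of_int (b ^ (p-1)) * (P^n :: rat)"
    unfolding Pab pn using b0 by (simp add: power_mult power_mult_distrib field_simps power2_eq_square)
  then show ?thesis using cg_trans[OF e1] e3 unfolding n_def by simp
qed

end




lemma fact_choose_prod: "fact k * (N choose k) = (\<Prod>t<k. N - t)"
proof (induction k)
  case 0 then show ?case by simp
next
  case (Suc k)
  have "Suc k * (N choose Suc k) = (N - k) * (N choose k)"
    by (metis binomial_absorb_comp binomial_absorption diff_Suc_1 mult.commute)
  have "fact (Suc k) * (N choose Suc k) = fact k * (Suc k * (N choose Suc k))"
    by (simp add: fact_Suc algebra_simps)
  also have "\<dots> = (N - k) * (fact k * (N choose k))" using \<open>Suc k * _ = _\<close> by simp
  also have "\<dots> = (\<Prod>t<Suc k. N - t)" using Suc by simp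
  finally show ?case .
qed

lemma prod_split_nat: "(\<Prod>t<a+b. f t) = (\<Prod>t<a. f t) * (\<Prod>s<b. f (a+s))" for f :: "nat \<Rightarrow> nat"
  by (induction b) (simp_all add: algebra_simps)

lemma fact_double: "fact (2*j) = 2^j * fact j * (\<Prod>t<j. 2*t+1::nat)"
proof (induction j)
  case 0 then show ?case by simp
next
  case (Suc j)
  have "fact (2 * Suc j) = (2*j+2) * ((2*j+1) * (fact (2*j) :: nat))"
    by (simp add: fact_Suc algebra_simps)
  also have "\<dots> = 2^Suc j * fact (Suc j) * (\<Prod>t<Suc j. 2*t+1::nat)"
    using Suc by (simp add: fact_Suc algebra_simps)
  finally show ?case .
qed

lemma central_aux: "fact i * ((4*i+1) choose (2*i)) = 2^i * (\<Prod>t<i. 2*i+3+2*t::nat)"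
proof -
  define D where "D j = (\<Prod>t<j. 2*t+1::nat)" for j
  define R where "R = (\<Prod>t<i. 2*i+3+2*t::nat)"
  define C where "C = (4*i+1) choose (2*i)"
  have D0: "D j > 0" for j unfolding D_def by (simp add: prod_pos)
  have DR: "D (2*i+1) = D (i+1) * R"
  proof -
    have "2*i+1 = (i+1)+i" by simp
    then have "D (2*i+1) = (\<Prod>t<(i+1)+i. 2*t+1)" unfolding D_def by metis
    also have "\<dots> = D (i+1) * (\<Prod>s<i. 2*(i+1+s)+1)"
      unfolding D_def by (rule prod_split_nat)
    also have "(\<Prod>s<i. 2*(i+1+s)+1) = R" unfolding R_def
      by (rule prod.cong) (simp_all add: algebra_simps)
    finally show ?thesis .
  qed
  have f1: "fact (2*i) * fact (2*i+1) * C = (fact (4*i+1) :: nat)"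
    using binomial_fact_lemma[of "2*i" "4*i+1"] unfolding C_def
    by (simp add: algebra_simps)
  have f2: "fact (4*i+2) = 2^(2*i+1) * fact (2*i+1) * (D (2*i+1) :: nat)"
    using fact_double[of "2*i+1"] unfolding D_def by (simp add: algebra_simps)
  have f3: "fact (4*i+2) = (4*i+2) * (fact (4*i+1) :: nat)"
    by (simp add: fact_Suc numeral_eq_Suc algebra_simps)
  have "(4*i+2) * (fact (2*i) * fact (2*i+1) * C) = 2^(2*i+1) * fact (2*i+1) * D (2*i+1)"
    using f1 f2 f3 by simp
  then have "fact (2*i+1) * ((4*i+2) * fact (2*i) * C) = fact (2*i+1) * (2^(2*i+1) * D (2*i+1))"
    by (simp only: ac_simps)
  moreover have "fact (2*i+1) \<noteq> (0::nat)" by simp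
  ultimately have "(4*i+2) * fact (2*i) * C = 2^(2*i+1) * D (2*i+1)"
    by (metis mult_left_cancel)
  then have "(4*i+2) * (2^i * fact i * D i) * C = 2^(2*i+1) * ((2*i+1) * D i * R)"
  proof -
    have fd: "fact (2*i) = 2^i * fact i * D i" using fact_double[of i] unfolding D_def .
    have D1: "D (i+1) = (2*i+1) * D i" unfolding D_def by simp
    show ?thesis using \<open>(4*i+2) * fact (2*i) * C = _\<close> unfolding fd DR D1 .
  qed
  then have "(2^(i+1) * (2*i+1) * D i) * (fact i * C) = (2^(i+1) * (2*i+1) * D i) * (2^i * R)"
  proof -
    have p2: "(2::nat)^(2*i+1) = 2 * (2^i * 2^i)" by (simp add: power_add mult_2)
    show ?thesis using \<open>(4*i+2) * (2^i * fact i * D i) * C = _\<close> unfolding p2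
      by (simp add: algebra_simps)
  qed
  moreover have "2^(i+1) * (2*i+1) * D i \<noteq> 0" using D0[of i] by simp
  ultimately have "fact i * C = 2^i * R" by (metis mult_left_cancel)
  then show ?thesis unfolding C_def R_def .
qed

lemma prod_neg_int: "(\<Prod>t<k. - f t) = (-1)^k * (\<Prod>t<k. f t :: int)"
  by (induction k) (simp_all add: algebra_simps)

lemma key_cong:
  assumes pp: "prime p" and pn: "p = 2*n+1" and i: "2*i+1 \<le> n"
  shows "[(-4)^i * int ((n-1-i) choose i) = int ((4*i+1) choose (2*i))] (mod int p)"
proof -
  define N where "N = n-1-i"
  define c where "c t = int (2*i+3+2*t)" for t
  have iN: "i \<le> N" using i unfolding N_def by simp
  have h1: "int (fact i * (N choose i)) = (\<Prod>t<i. int (N - t))"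
    unfolding fact_choose_prod by (simp add: of_nat_prod)
  have h2: "2 * int (N - t) = int p - c t" if "t < i" for t
    using that iN i unfolding c_def N_def pn by auto
  have "2^i * int (fact i * (N choose i)) = (\<Prod>t<i. 2 * int (N - t))"
    unfolding h1 by (simp add: prod.distrib)
  also have "\<dots> = (\<Prod>t<i. int p - c t)" by (rule prod.cong) (simp_all add: h2)
  finally have e1: "2^i * int (fact i * (N choose i)) = (\<Prod>t<i. int p - c t)" .
  have "[(\<Prod>t<i. int p - c t) = (\<Prod>t<i. - c t)] (mod int p)"
    by (rule cong_prod) (simp add: cong_iff_dvd_diff)
  moreover have "(\<Prod>t<i. - c t) = (-1)^i * (\<Prod>t<i. c t)"
    by (rule prod_neg_int)
  ultimately have e2: "[2^i * int (fact i * (N choose i)) = (-1)^i * (\<Prod>t<i. c t)] (mod int p)"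
    using e1 by simp
  have e3: "int (fact i * ((4*i+1) choose (2*i))) = 2^i * (\<Prod>t<i. c t)"
    unfolding central_aux c_def by (simp add: of_nat_prod)
  have "[(-2)^i * (2^i * int (fact i * (N choose i))) = (-2)^i * ((-1)^i * (\<Prod>t<i. c t))] (mod int p)"
    using e2 by (rule cong_scalar_left)
  note cg0 = this
  have m4: "(-4::int)^i = (-2)^i * 2^i"
    by (simp add: power_mult_distrib[symmetric])
  have eqA: "(-2::int)^i * (2^i * int (fact i * (N choose i))) = int (fact i) * ((-4)^i * int (N choose i))"
    unfolding m4 by (simp add: algebra_simps)
  have eqB: "(-2::int)^i * ((-1)^i * (\<Prod>t<i. c t)) = int (fact i) * int ((4*i+1) choose (2*i))"
  proof -
    have m2: "(-2::int)^i * (-1)^i = 2^i" by (simp add: power_mult_distrib[symmetric])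
    have "(-2::int)^i * ((-1)^i * (\<Prod>t<i. c t)) = ((-2::int)^i * (-1)^i) * (\<Prod>t<i. c t)"
      by (simp only: mult.assoc)
    also have "\<dots> = int (fact i * ((4*i+1) choose (2*i)))" unfolding m2 e3 ..
    finally show ?thesis by simp
  qed
  have e4: "[int (fact i) * ((-4)^i * int (N choose i)) = int (fact i) * int ((4*i+1) choose (2*i))] (mod int p)"
    using cg0 unfolding eqA eqB .
  have "\<not> p dvd fact i" using pp i pn by (simp add: prime_dvd_fact_iff)
  then have "\<not> int p dvd int (fact i)" by (simp only: int_dvd_int_iff) simp
  then have "coprime (int (fact i)) (int p)"
    using prime_imp_coprime[of "int p"] pp by (simp add: coprime_commute)
  then show ?thesis using e4 unfolding N_def by (simp add: cong_mult_lcancel)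
qed




lemma binom_pascal_aux: "k \<le> Suc i \<Longrightarrow> (Suc i - k) choose (Suc k) = ((i - k) choose (Suc k)) + ((i - k) choose k)"
proof (cases "k \<le> i")
  case True
  then have "Suc i - k = Suc (i - k)" by simp
  then show ?thesis by simp
next
  case False
  assume "k \<le> Suc i"
  then have "k = Suc i" using False by simp
  then show ?thesis by simp
qed

lemma lucas_expand:
  assumes P0: "P \<noteq> 0"
  shows "lucasU P Q (Suc j) = (\<Sum>k\<le>j. of_nat ((j-k) choose k) * P^j * (-Q/P^2)^k)"
proof -
  define z where "z = -Q/P^2"
  define T where "T j k = of_nat ((j-k) choose k) * P^j * z^k" for j k
  have Qz: "Q = - z * P^2" unfolding z_def using P0 by (simp add: field_simps)
  have pad: "(\<Sum>k\<le>j+d. T j k) = (\<Sum>k\<le>j. T j k)" for j d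
  proof (induction d)
    case 0 then show ?case by simp
  next
    case (Suc d)
    have "T j (Suc (j+d)) = 0" unfolding T_def by simp
    then show ?case using Suc by simp
  qed
  have main: "lucasU P Q (Suc j) = (\<Sum>k\<le>j. T j k)" for j
  proof (induction j rule: less_induct)
    case (less j)
    show ?case
    proof (cases j)
      case 0 then show ?thesis unfolding T_def by simp
    next
      case (Suc j1)
      show ?thesis
      proof (cases j1)
        case 0 then show ?thesis using Suc unfolding T_def by simp
      next
        case (Suc i)
        have j: "j = Suc (Suc i)" using Suc \<open>j = Suc j1\<close> by simp
        have IH1: "lucasU P Q (Suc (Suc i)) = (\<Sum>k\<le>Suc i. T (Suc i) k)" by (rule less.IH) (simp add: j)
        have IH0: "lucasU P Q (Suc i) = (\<Sum>k\<le>i. T i k)" by (rule less.IH) (simp add: j)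
        have G1: "(\<Sum>k\<le>Suc i. T (Suc i) k) = T (Suc i) 0 + (\<Sum>k\<le>i. T (Suc i) (Suc k))"
          by (rule sum.atMost_Suc_shift)
        have G2: "(\<Sum>k\<le>Suc (Suc i). T (Suc (Suc i)) k) = T (Suc (Suc i)) 0 + (\<Sum>k\<le>Suc i. T (Suc (Suc i)) (Suc k))"
          by (rule sum.atMost_Suc_shift)
        have G0: "(\<Sum>k\<le>i. T i k) = (\<Sum>k\<le>Suc i. T i k)" using pad[of i 1] by simp
        have G1': "(\<Sum>k\<le>i. T (Suc i) (Suc k)) = (\<Sum>k\<le>Suc i. T (Suc i) (Suc k))"
          unfolding T_def by simp
        have trm: "T (Suc (Suc i)) (Suc k) = P * T (Suc i) (Suc k) - Q * T i k" if "k \<le> Suc i" for k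
        proof -
          have "T (Suc (Suc i)) (Suc k) = (of_nat ((i - k) choose (Suc k)) + of_nat ((i - k) choose k)) * P^(Suc (Suc i)) * z^(Suc k)"
            unfolding T_def using binom_pascal_aux[OF that] by simp
          also have "\<dots> = P * T (Suc i) (Suc k) - Q * T i k"
            unfolding T_def Qz by (simp add: algebra_simps power2_eq_square)
          finally show ?thesis .
        qed
        have "lucasU P Q (Suc j) = P * lucasU P Q (Suc (Suc i)) - Q * lucasU P Q (Suc i)"
          using j by simp
        also have "\<dots> = P * (T (Suc i) 0 + (\<Sum>k\<le>Suc i. T (Suc i) (Suc k))) - Q * (\<Sum>k\<le>Suc i. T i k)"
          unfolding IH1 IH0 G1 G1' G0 ..
        also have "\<dots> = P * T (Suc i) 0 + (\<Sum>k\<le>Suc i. P * T (Suc i) (Suc k) - Q * T i k)"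
          by (simp add: sum_distrib_left sum_subtractf algebra_simps)
        also have "\<dots> = T (Suc (Suc i)) 0 + (\<Sum>k\<le>Suc i. T (Suc (Suc i)) (Suc k))"
          using trm by (simp add: T_def)
        also have "\<dots> = (\<Sum>k\<le>j. T j k)" unfolding G2 j ..
        finally show ?thesis .
      qed
    qed
  qed
  show ?thesis using main[of j] unfolding T_def z_def .
qed




theorem lemma3p2:
  fixes p :: nat and P Q :: rat
  assumes "prime p" and "odd p"
    and "in_Zp p P" and "in_Zp p Q"
    and "\<not> rat_cong (P * Q) 0 p"
  shows "rat_cong (lucasU P Q ((p - 1) div 2))
           (2 * P / Q * of_int (Legendre_rat P p) *
            (\<Sum>k = 1..(p + 1) div 4. of_nat ((4 * k - 2) choose (2 * k - 1)) * (Q / (4 * P ^ 2)) ^ k))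
           p"
proof -
  note pp = assms(1)
  define n where "n = (p - 1) div 2"
  define K where "K = (p + 1) div 4"
  define L where "L = (of_int (Legendre_rat P p) :: rat)"
  define z where "z = - Q / P^2"
  define w where "w = Q / (4 * P^2)"
  have p2: "p \<ge> 2" using prime_ge_2_nat[OF pp] .
  have pn: "p = 2*n+1" unfolding n_def using assms(2) by presburger
  have n1: "n \<ge> 1" using p2 assms(2) pn by presburger
  have Kn: "K = (n+1) div 2" unfolding K_def pn by presburger
  have PQ: "\<not> in_Zp p (P * Q / of_nat p)" using assms(5) unfolding rat_cong_def by simp
  have nP: "\<not> in_Zp p (P / of_nat p)"
  proof
    assume "in_Zp p (P / of_nat p)"
    then have "in_Zp p (P / of_nat p * Q)" using Zp_mult[OF pp] assms(4) by blast
    then show False using PQ by simp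
  qed
  have nQ: "\<not> in_Zp p (Q / of_nat p)"
  proof
    assume "in_Zp p (Q / of_nat p)"
    then have "in_Zp p (P * (Q / of_nat p))" using Zp_mult[OF pp] assms(3) by blast
    then show False using PQ by simp
  qed
  have P0: "P \<noteq> 0" using nP Zp_int[OF pp, of 0] by auto
  have Q0: "Q \<noteq> 0" using nQ Zp_int[OF pp, of 0] by auto
  have iP: "in_Zp p (1 / P)" using Zp_unit_inverse[OF pp assms(3) nP] .
  have zZ: "in_Zp p z"
  proof -
    have "z = - Q * (1/P) * (1/P)" unfolding z_def by (simp add: power2_eq_square)
    then show ?thesis using Zp_mult[OF pp Zp_mult[OF pp Zp_uminus[OF pp assms(4)] iP] iP] by simp
  qed
  have U1: "lucasU P Q n = (\<Sum>k\<le>n-1. of_nat ((n-1-k) choose k) * P^(n-1) * z^k)"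
    using lucas_expand[OF P0, of Q "n-1"] n1 unfolding z_def by simp
  have U2: "(\<Sum>k\<le>n-1. of_nat ((n-1-k) choose k) * P^(n-1) * z^k)
      = (\<Sum>k<K. of_nat ((n-1-k) choose k) * P^(n-1) * z^k)"
  proof (rule sum.mono_neutral_right)
    show "finite {..n-1}" by simp
    show "{..<K} \<subseteq> {..n-1}" using Kn n1 by auto
    show "\<forall>i\<in>{..n - 1} - {..<K}. of_nat ((n-1-i) choose i) * P^(n-1) * z^i = 0"
    proof
      fix i assume "i \<in> {..n - 1} - {..<K}"
      then have "n-1-i < i" using Kn n1 by auto
      then show "of_nat ((n-1-i) choose i) * P^(n-1) * z^i = 0" by simp
    qed
  qed
  have R1: "(\<Sum>k = 1..K. of_nat ((4 * k - 2) choose (2 * k - 1)) * w ^ k)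
      = (\<Sum>i<K. of_nat ((4 * Suc i - 2) choose (2 * Suc i - 1)) * w ^ Suc i)"
    using sum.atLeast1_atMost_eq[of "\<lambda>k. of_nat ((4 * k - 2) choose (2 * k - 1)) * w ^ k" K]
    by simp
  have R2: "2 * P / Q * L * (\<Sum>i<K. of_nat ((4 * Suc i - 2) choose (2 * Suc i - 1)) * w ^ Suc i)
      = (\<Sum>i<K. of_nat ((4*i+1) choose (2*i)) * (L * (1/P)) * (z^i / (-4)^i))"
    unfolding sum_distrib_left
  proof (rule sum.cong)
    fix i
    have b: "(4 * Suc i - 2) choose (2 * Suc i - 1) = 2 * ((4*i+1) choose (2*i))"
    proof -
      have "(4 * Suc i - 2) choose (2 * Suc i - 1) = Suc (4*i+1) choose Suc (2*i)" by simp
      also have "\<dots> = ((4*i+1) choose (2*i)) + ((4*i+1) choose (2*i+1))" by simp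
      also have "(4*i+1) choose (2*i+1) = (4*i+1) choose (2*i)"
        using binomial_symmetric[of "2*i+1" "4*i+1"] by simp
      finally show ?thesis by simp
    qed
    have wz: "w = z / (-4)" unfolding w_def z_def by simp
    show "2 * P / Q * L * (of_nat ((4 * Suc i - 2) choose (2 * Suc i - 1)) * w ^ Suc i)
        = of_nat ((4*i+1) choose (2*i)) * (L * (1/P)) * (z^i / (-4)^i)"
    proof -
      have z0: "z \<noteq> 0" unfolding z_def using P0 Q0 by simp
      have Qz: "Q = - z * P^2" unfolding z_def using P0 by simp
      have e4: "(z / (-4)) ^ Suc i = z / (-4) * (z^i / (-4)^i)"
        by (simp only: power_Suc power_divide)
      have gen: "2*P/(-z*P^2) * L * (c * 2 * (z/(-4) * u)) = c * (L*(1/P)) * u" for c u :: rat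
      proof -
        have h: "2*P/(-z*P^2) = -(2/(z*P))" using P0 by (simp add: power2_eq_square)
        have "-(2/(z*P)) * L * (c * 2 * (z/(-4) * u)) = c * (L*(1/P)) * u"
          using P0 z0 by (simp add: divide_simps)
        then show ?thesis unfolding h .
      qed
      show ?thesis unfolding b wz Qz e4 of_nat_mult using gen by simp
    qed
  qed simp
  have LP: "rat_cong (P^(n-1)) (L * (1/P)) p"
  proof -
    have "rat_cong L (P^n) p" unfolding L_def n_def by (rule legendre_cg[OF pp assms(2,3)])
    then have "rat_cong (L * (1/P)) (P^n * (1/P)) p" by (rule cg_mult_right[OF pp _ iP])
    moreover have "P^n * (1/P) = P^(n-1)"
    proof -
      have "n = Suc (n-1)" using n1 by simp
      then have "P^n = P * P^(n-1)" by (metis power_Suc)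
      then show ?thesis using P0 by simp
    qed
    ultimately show ?thesis using cg_sym[OF pp] by simp
  qed
  have LZ: "in_Zp p (L * (1/P))"
    unfolding L_def using Zp_mult[OF pp Zp_int[OF pp] iP] .
  have trm: "rat_cong (of_nat ((n-1-i) choose i) * P^(n-1) * z^i)
       (of_nat ((4*i+1) choose (2*i)) * (L * (1/P)) * (z^i / (-4)^i)) p" if "i < K" for i
  proof -
    have i: "2*i+1 \<le> n" using that Kn by simp
    have A: "rat_cong (of_int ((-4)^i * int ((n-1-i) choose i))) (of_int (int ((4*i+1) choose (2*i)))) p"
      by (rule cg_int[OF pp key_cong[OF pp pn i]])
    have u: "in_Zp p (z^i / (-4)^i)"
    proof -
      have "\<not> int p dvd (-4)^i"
      proof
        assume d: "int p dvd (-4)^i"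
        have ip: "prime (int p)" using pp by simp
        have "int p dvd \<bar>(-4)^i\<bar>" using d by (simp only: dvd_abs_iff)
        moreover have "\<bar>(-4::int)^i\<bar> = 2^(2*i)" by (simp add: power_abs power_mult)
        ultimately have "int p dvd 2^(2*i)" by simp
        then have "int p dvd 2" using ip prime_dvd_power by blast
        then have "p dvd 2" by presburger
        then have "p \<le> 2" by (rule dvd_imp_le) simp
        then have "p = 2" using p2 by simp
        then show False using assms(2) by simp
      qed
      then have "in_Zp p (1 / of_int ((-4)^i))" by (rule Zp_inverse_int[OF pp])
      then have "in_Zp p (z^i * (1 / of_int ((-4)^i)))" using Zp_mult[OF pp Zp_power[OF pp zZ]] by blast
      then show ?thesis by simp
    qed
    have "rat_cong (of_int ((-4)^i * int ((n-1-i) choose i)) * P^(n-1))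
        (of_int (int ((4*i+1) choose (2*i))) * (L * (1/P))) p"
      by (rule cg_mult[OF pp A LP Zp_int[OF pp] LZ])
    then have "rat_cong (of_int ((-4)^i * int ((n-1-i) choose i)) * P^(n-1) * (z^i / (-4)^i))
        (of_int (int ((4*i+1) choose (2*i))) * (L * (1/P)) * (z^i / (-4)^i)) p"
      by (rule cg_mult_right[OF pp _ u])
    moreover have "of_int ((-4)^i * int ((n-1-i) choose i)) * P^(n-1) * (z^i / (-4)^i)
        = of_nat ((n-1-i) choose i) * P^(n-1) * z^i"
      by (simp add: field_simps)
    ultimately show ?thesis by (simp only: of_int_of_nat_eq)
  qed
  have "rat_cong (lucasU P Q n) (\<Sum>i<K. of_nat ((4*i+1) choose (2*i)) * (L * (1/P)) * (z^i / (-4)^i)) p"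
    unfolding U1 U2 by (rule cg_sum[OF pp]) (use trm in auto)
  then show ?thesis unfolding n_def[symmetric] K_def[symmetric] L_def[symmetric] w_def[symmetric]
    using R1 R2 by simp
qed


end
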